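(* Let $\sigma\ge0$, $\gamma>0$, $V=\sqrt{1+\sigma}$, let $(n^\varepsilon,u^\varepsilon,\phi^\varepsilon)$ be the solitary wave solution and $\widetilde N_\varepsilon(\xi)=\frac{n^\varepsilon(\xi)-1}{\varepsilon}$. There exist positive constants $\varepsilon_0$ and $\delta_1$ such that for each $0<\delta<\delta_1$ there exists $\xi_\delta>0$ with \[ 0<\widetilde N_\varepsilon(\xi)\le\delta\qquad\text{for all }\xi\ge\xi_\delta\text{ and all }0<\varepsilon<\varepsilon_0. \] Here $\delta_1,\delta,\xi_\delta$ are independent of $\varepsilon$ and $\xi$.
   Context: For $\varepsilon>0$, consider the system in $\xi\in\mathbb{R}$: $-(V+\gamma\varepsilon)n'+(nu)'=0$, $-(V+\gamma\varepsilon)u'+uu'+\sigma n'/n=-\phi'$, $\varepsilon\phi''=e^\phi-n$, with $n\to1,u\to0,\phi\to0$ as $|\xi|\to\infty$. With $V=\sqrt{1+\sigma}$, for all sufficiently small $\varepsilon>0$ it has a non-trivial smooth solution unique up to translation; the "solitary wave solution" $(n^\varepsilon,u^\varepsilon,\phi^\varepsilon)$ is the translate that is even in $\xi$ and has all components strictly decreasing on $(0,\infty)$. *)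

theory Defs
  imports "HOL-Analysis.Analysis"
begin

definition smooth_real :: "(real \<Rightarrow> real) \<Rightarrow> bool" where
  "smooth_real f \<longleftrightarrow> (\<forall>k x. ((deriv ^^ k) f) differentiable (at x))"

text \<open>Positivity of n is required for the term sigma n'/n to make sense.\<close>
definition tw_solution ::
  "real \<Rightarrow> real \<Rightarrow> real \<Rightarrow> (real \<Rightarrow> real) \<Rightarrow> (real \<Rightarrow> real) \<Rightarrow> (real \<Rightarrow> real) \<Rightarrow> bool" where
  "tw_solution \<sigma> \<gamma> \<epsilon> n u \<phi> \<longleftrightarrow>
     (let V = sqrt (1 + \<sigma>) in
       smooth_real n \<and> smooth_real u \<and> smooth_real \<phi> \<and>
       (\<forall>x. n x > 0) \<and>
       (\<forall>x. - (V + \<gamma> * \<epsilon>) * deriv n x + deriv (\<lambda>y. n y * u y) x = 0) \<and>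
       (\<forall>x. - (V + \<gamma> * \<epsilon>) * deriv u x + u x * deriv u x + \<sigma> * deriv n x / n x
              = - deriv \<phi> x) \<and>
       (\<forall>x. \<epsilon> * deriv (deriv \<phi>) x = exp (\<phi> x) - n x) \<and>
       (n \<longlongrightarrow> 1) at_top \<and> (n \<longlongrightarrow> 1) at_bot \<and>
       (u \<longlongrightarrow> 0) at_top \<and> (u \<longlongrightarrow> 0) at_bot \<and>
       (\<phi> \<longlongrightarrow> 0) at_top \<and> (\<phi> \<longlongrightarrow> 0) at_bot)"

definition solitary_wave ::
  "real \<Rightarrow> real \<Rightarrow> real \<Rightarrow> (real \<Rightarrow> real) \<Rightarrow> (real \<Rightarrow> real) \<Rightarrow> (real \<Rightarrow> real) \<Rightarrow> bool" where
  "solitary_wave \<sigma> \<gamma> \<epsilon> n u \<phi> \<longleftrightarrow>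
     tw_solution \<sigma> \<gamma> \<epsilon> n u \<phi> \<and>
     \<not> (n = (\<lambda>_. 1) \<and> u = (\<lambda>_. 0) \<and> \<phi> = (\<lambda>_. 0)) \<and>
     (\<forall>x. n (- x) = n x \<and> u (- x) = u x \<and> \<phi> (- x) = \<phi> x) \<and>
     strict_antimono_on {0<..} n \<and> strict_antimono_on {0<..} u \<and>
     strict_antimono_on {0<..} \<phi>"

end

theory Submission
  imports Defs
begin



definition Gf :: "real \<Rightarrow> real \<Rightarrow> real \<Rightarrow> real" where
  "Gf s w x = w / 2 * (1 - 1 / x^2) - s * ln x"
definition G1f :: "real \<Rightarrow> real \<Rightarrow> real \<Rightarrow> real" where
  "G1f s w x = w / x^3 - s / x"
definition G2f :: "real \<Rightarrow> real \<Rightarrow> real \<Rightarrow> real" where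
  "G2f s w x = -3 * w / x^4 + s / x^2"
definition G3f :: "real \<Rightarrow> real \<Rightarrow> real \<Rightarrow> real" where
  "G3f s w x = 12 * w / x^5 - 2 * s / x^3"
definition Kf :: "real \<Rightarrow> real \<Rightarrow> real \<Rightarrow> real" where
  "Kf s w x = exp (Gf s w x) - 1 - w * (1 - 1 / x) + s * (x - 1)"
definition K1f :: "real \<Rightarrow> real \<Rightarrow> real \<Rightarrow> real" where
  "K1f s w x = G1f s w x * (exp (Gf s w x) - x)"
definition K2f :: "real \<Rightarrow> real \<Rightarrow> real \<Rightarrow> real" where
  "K2f s w x = G2f s w x * (exp (Gf s w x) - x) + G1f s w x * (G1f s w x * exp (Gf s w x) - 1)"
definition K3f :: "real \<Rightarrow> real \<Rightarrow> real \<Rightarrow> real" where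
  "K3f s w x = G3f s w x * (exp (Gf s w x) - x) + 2 * G2f s w x * (G1f s w x * exp (Gf s w x) - 1)
     + G1f s w x * G2f s w x * exp (Gf s w x) + (G1f s w x)^3 * exp (Gf s w x)"

lemma dG: "x > 0 \<Longrightarrow> (Gf s w has_real_derivative G1f s w x) (at x)"
  unfolding Gf_def G1f_def
  by (auto intro!: derivative_eq_intros simp: field_simps power2_eq_square power3_eq_cube)
lemma dG1: "x > 0 \<Longrightarrow> (G1f s w has_real_derivative G2f s w x) (at x)"
  unfolding G2f_def G1f_def
  by (auto intro!: derivative_eq_intros simp: field_simps eval_nat_numeral)
lemma dG2: "x > 0 \<Longrightarrow> (G2f s w has_real_derivative G3f s w x) (at x)"
  unfolding G2f_def G3f_def
  by (auto intro!: derivative_eq_intros simp: field_simps eval_nat_numeral)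

lemma dK: "x > 0 \<Longrightarrow> (Kf s w has_real_derivative K1f s w x) (at x)"
proof -
  assume x: "x > 0"
  have "((\<lambda>x. exp (Gf s w x) - 1 - w * (1 - 1 / x) + s * (x - 1)) has_real_derivative
     exp (Gf s w x) * G1f s w x - 0 - w * (0 - (- 1/ x^2)) + s * (1 - 0)) (at x)"
    using x by (auto intro!: derivative_eq_intros dG simp: power2_eq_square)
  moreover have "exp (Gf s w x) * G1f s w x - 0 - w * (0 - (- 1/ x^2)) + s * (1 - 0) = K1f s w x"
    using x unfolding K1f_def G1f_def by (simp add: field_simps eval_nat_numeral)
  ultimately show ?thesis unfolding Kf_def by simp
qed

lemma dK1: "x > 0 \<Longrightarrow> (K1f s w has_real_derivative K2f s w x) (at x)"
  unfolding K1f_def K2f_def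
  by (auto intro!: derivative_eq_intros dG dG1 simp: field_simps)

lemma dK2: "x > 0 \<Longrightarrow> (K2f s w has_real_derivative K3f s w x) (at x)"
  unfolding K3f_def K2f_def
  by (auto intro!: derivative_eq_intros dG dG1 dG2 simp: field_simps eval_nat_numeral)




lemma cont_nbhd:
  fixes h :: "real \<times> real \<Rightarrow> real"
  assumes "isCont h (a,b)" "h (a,b) < c"
  shows "\<exists>r>0. \<forall>w x. \<bar>w-a\<bar> < r \<longrightarrow> \<bar>x-b\<bar> < r \<longrightarrow> h (w,x) < c"
proof -
  have "(h \<longlongrightarrow> h (a,b)) (nhds (a,b))"
    using assms(1) by (simp add: isCont_def tendsto_at_iff_tendsto_nhds)
  hence "eventually (\<lambda>p. h p < c) (nhds (a,b))"
    using assms(2) order_tendstoD(2) by blast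
  then obtain d where d: "d > 0" "\<And>y. dist y (a,b) < d \<Longrightarrow> h y < c"
    unfolding eventually_nhds_metric by blast
  show ?thesis
  proof (intro exI[of _ "d/2"] conjI allI impI)
    fix w x assume "\<bar>w-a\<bar> < d/2" "\<bar>x-b\<bar> < d/2"
    have "dist (w,x) (a,b) \<le> dist w a + dist x b"
      unfolding dist_Pair_Pair by (rule real_sqrt_sum_squares_triangle_ineq[of _ 0 0, simplified, THEN order_trans]) (auto simp: dist_real_def)
    also have "\<dots> < d" using \<open>\<bar>w-a\<bar> < d/2\<close> \<open>\<bar>x-b\<bar> < d/2\<close> by (simp add: dist_real_def)
    finally show "h (w,x) < c" using d by blast
  qed (use d in auto)
qed

lemma nbhd:
  fixes s :: real
  assumes "s \<ge> 0"
  shows "\<exists>r>0. r \<le> 1/2 \<and> (\<forall>w x. \<bar>w - (1+s)\<bar> < r \<longrightarrow> \<bar>x - 1\<bar> < r \<longrightarrow>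
            K3f s w x < -(1+s) \<and> (G1f s w x)^2 < 4)"
proof -
  have c1: "isCont (\<lambda>p. K3f s (fst p) (snd p)) (1+s,1)"
    unfolding K3f_def G1f_def G2f_def G3f_def Gf_def
    by (auto intro!: continuous_intros)
  have v1: "K3f s (1+s) 1 < -(1+s)"
    using assms unfolding K3f_def G1f_def G2f_def G3f_def Gf_def by simp
  have c2: "isCont (\<lambda>p. (G1f s (fst p) (snd p))^2) (1+s,1)"
    unfolding G1f_def by (auto intro!: continuous_intros)
  have v2: "(G1f s (1+s) 1)^2 < 4"
    unfolding G1f_def by simp
  obtain r1 where r1: "r1 > 0" "\<And>w x. \<bar>w-(1+s)\<bar> < r1 \<Longrightarrow> \<bar>x-1\<bar> < r1 \<Longrightarrow> K3f s w x < -(1+s)"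
    using cont_nbhd[OF c1, of "-(1+s)"] v1 by force
  obtain r2 where r2: "r2 > 0" "\<And>w x. \<bar>w-(1+s)\<bar> < r2 \<Longrightarrow> \<bar>x-1\<bar> < r2 \<Longrightarrow> (G1f s w x)^2 < 4"
    using cont_nbhd[OF c2, of 4] v2 by force
  show ?thesis
    by (rule exI[of _ "min (1/2) (min r1 r2)"]) (use r1 r2 in auto)
qed




lemma cmp:
  fixes f g f' g' :: "real \<Rightarrow> real"
  assumes ab: "a \<le> b"
    and df: "\<And>t. a \<le> t \<Longrightarrow> t \<le> b \<Longrightarrow> (f has_real_derivative f' t) (at t)"
    and dg: "\<And>t. a \<le> t \<Longrightarrow> t \<le> b \<Longrightarrow> (g has_real_derivative g' t) (at t)"
    and le: "\<And>t. a \<le> t \<Longrightarrow> t \<le> b \<Longrightarrow> f' t \<le> g' t"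
    and init: "f a \<le> g a"
  shows "f b \<le> g b"
proof -
  have "(\<lambda>t. g t - f t) a \<le> (\<lambda>t. g t - f t) b"
  proof (rule DERIV_nonneg_imp_increasing_open[OF ab])
    fix x assume x: "a < x" "x < b"
    have "((\<lambda>t. g t - f t) has_real_derivative (g' x - f' x)) (at x)"
      using df[of x] dg[of x] x by (intro DERIV_diff) auto
    thus "\<exists>y. ((\<lambda>t. g t - f t) has_real_derivative y) (at x) \<and> 0 \<le> y"
      using le[of x] x by auto
  next
    have "\<And>x. x \<in> {a..b} \<Longrightarrow> isCont (\<lambda>t. g t - f t) x"
    proof -
      fix x assume "x \<in> {a..b}"
      hence "isCont f x" "isCont g x" using df[of x] dg[of x] DERIV_isCont by auto
      thus "isCont (\<lambda>t. g t - f t) x" by (intro isCont_diff)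
    qed
    thus "continuous_on {a..b} (\<lambda>t. g t - f t)"
      by (simp add: continuous_at_imp_continuous_on)
  qed
  thus ?thesis using init by simp
qed

lemma shift_deriv:
  assumes "(F has_real_derivative D) (at (1 + t))"
  shows "((\<lambda>t. F (1 + t)) has_real_derivative D) (at t)"
proof -
  have "((\<lambda>t. 1 + t) has_real_derivative 1) (at t)" by (auto intro!: derivative_eq_intros)
  from DERIV_chain2[where f=F and g="\<lambda>t. 1 + t", OF assms this] show ?thesis by simp
qed

lemma K_at1: "Kf s w 1 = 0" "K1f s w 1 = 0" "K2f s w 1 = (w - s) * (w - s - 1)"
  by (simp_all add: Kf_def K1f_def K2f_def G1f_def Gf_def)

context
  fixes s w r c :: real
  assumes r: "r > 0" "r \<le> 1/2"
    and K3b: "\<And>x. 1 \<le> x \<Longrightarrow> x < 1 + r \<Longrightarrow> K3f s w x \<le> - 6 * c"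
begin

lemma dK_s: "0 \<le> t \<Longrightarrow> ((\<lambda>t. Kf s w (1+t)) has_real_derivative K1f s w (1+t)) (at t)"
  by (rule shift_deriv, rule dK) simp
lemma dK1_s: "0 \<le> t \<Longrightarrow> ((\<lambda>t. K1f s w (1+t)) has_real_derivative K2f s w (1+t)) (at t)"
  by (rule shift_deriv, rule dK1) simp
lemma dK2_s: "0 \<le> t \<Longrightarrow> ((\<lambda>t. K2f s w (1+t)) has_real_derivative K3f s w (1+t)) (at t)"
  by (rule shift_deriv, rule dK2) simp

lemma T_K2: assumes "0 \<le> t" "t < r" shows "K2f s w (1+t) \<le> K2f s w 1 - 6 * c * t"
proof -
  have "(\<lambda>t. K2f s w (1+t)) t \<le> (\<lambda>t. K2f s w 1 - 6 * c * t) t"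
  proof (rule cmp[where a=0 and f="\<lambda>t. K2f s w (1+t)" and g="\<lambda>t. K2f s w 1 - 6 * c * t" and f'="\<lambda>t. K3f s w (1+t)" and g'="\<lambda>t. - 6 * c"])
    fix x assume x: "0 \<le> x" "x \<le> t"
    show "((\<lambda>t. K2f s w (1+t)) has_real_derivative K3f s w (1+x)) (at x)" using x by (intro dK2_s)
    show "((\<lambda>t. K2f s w 1 - 6 * c * t) has_real_derivative - 6 * c) (at x)"
      by (auto intro!: derivative_eq_intros)
    show "K3f s w (1+x) \<le> - 6 * c" using x assms by (intro K3b) auto
  qed (use assms in auto)
  thus ?thesis by simp
qed

lemma T_K1: assumes "0 \<le> t" "t < r" shows "K1f s w (1+t) \<le> K2f s w 1 * t - 3 * c * t^2"
proof -
  have "(\<lambda>t. K1f s w (1+t)) t \<le> (\<lambda>t. K2f s w 1 * t - 3 * c * t^2) t"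
  proof (rule cmp[where a=0 and f="\<lambda>t. K1f s w (1+t)" and g="\<lambda>t. K2f s w 1 * t - 3 * c * t^2" and f'="\<lambda>t. K2f s w (1+t)" and g'="\<lambda>t. K2f s w 1 - 6 * c * t"])
    fix x assume x: "0 \<le> x" "x \<le> t"
    show "((\<lambda>t. K1f s w (1+t)) has_real_derivative K2f s w (1+x)) (at x)" using x by (intro dK1_s)
    show "((\<lambda>t. K2f s w 1 * t - 3 * c * t^2) has_real_derivative K2f s w 1 - 6 * c * x) (at x)"
      by (auto intro!: derivative_eq_intros)
    show "K2f s w (1+x) \<le> K2f s w 1 - 6 * c * x" using x assms by (intro T_K2) auto
  qed (use assms in \<open>auto simp: K_at1\<close>)
  thus ?thesis by simp
qed

lemma T_K: assumes "0 \<le> t" "t < r" shows "Kf s w (1+t) \<le> K2f s w 1 * t^2 / 2 - c * t^3"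
proof -
  have "(\<lambda>t. Kf s w (1+t)) t \<le> (\<lambda>t. K2f s w 1 * t^2 / 2 - c * t^3) t"
  proof (rule cmp[where a=0 and f="\<lambda>t. Kf s w (1+t)" and g="\<lambda>t. K2f s w 1 * t^2 / 2 - c * t^3" and f'="\<lambda>t. K1f s w (1+t)" and g'="\<lambda>t. K2f s w 1 * t - 3 * c * t^2"])
    fix x assume x: "0 \<le> x" "x \<le> t"
    show "((\<lambda>t. Kf s w (1+t)) has_real_derivative K1f s w (1+x)) (at x)" using x by (intro dK_s)
    show "((\<lambda>t. K2f s w 1 * t^2 / 2 - c * t^3) has_real_derivative K2f s w 1 * x - 3 * c * x^2) (at x)"
      by (auto intro!: derivative_eq_intros simp: eval_nat_numeral)
    show "K1f s w (1+x) \<le> K2f s w 1 * x - 3 * c * x^2" using x assms by (intro T_K1) auto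
  qed (use assms in \<open>auto simp: K_at1\<close>)
  thus ?thesis by simp
qed

lemma T_D1: assumes "0 \<le> t" "t < r" shows "t * K2f s w (1+t) - K1f s w (1+t) \<le> - 3 * c * t^2"
proof -
  have "(\<lambda>t. t * K2f s w (1+t) - K1f s w (1+t)) t \<le> (\<lambda>t. - 3 * c * t^2) t"
  proof (rule cmp[where a=0 and f="\<lambda>t. t * K2f s w (1+t) - K1f s w (1+t)" and g="\<lambda>t. - 3 * c * t^2" and f'="\<lambda>t. t * K3f s w (1+t)" and g'="\<lambda>t. - 6 * c * t"])
    fix x assume x: "0 \<le> x" "x \<le> t"
    have "((\<lambda>t. t * K2f s w (1+t) - K1f s w (1+t)) has_real_derivative
        (x * K3f s w (1+x) + 1 * K2f s w (1+x) - K2f s w (1+x))) (at x)"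
      by (rule DERIV_diff[OF DERIV_mult'[OF DERIV_ident dK2_s] dK1_s]) (use x in auto)
    thus "((\<lambda>t. t * K2f s w (1+t) - K1f s w (1+t)) has_real_derivative x * K3f s w (1+x)) (at x)"
      by simp
    show "((\<lambda>t. - 3 * c * t^2) has_real_derivative - 6 * c * x) (at x)"
      by (auto intro!: derivative_eq_intros)
    have "K3f s w (1+x) \<le> - 6 * c" using x assms by (intro K3b) auto
    thus "x * K3f s w (1+x) \<le> - 6 * c * x" using x by (metis mult.commute mult_left_mono mult_minus_left)
  qed (use assms in \<open>auto simp: K_at1\<close>)
  thus ?thesis by simp
qed

lemma T_D: assumes "0 \<le> t" "t < r" shows "t * K1f s w (1+t) - 2 * Kf s w (1+t) \<le> - c * t^3"
proof -
  have "(\<lambda>t. t * K1f s w (1+t) - 2 * Kf s w (1+t)) t \<le> (\<lambda>t. - c * t^3) t"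
  proof (rule cmp[where a=0 and f="\<lambda>t. t * K1f s w (1+t) - 2 * Kf s w (1+t)" and g="\<lambda>t. - c * t^3" and f'="\<lambda>t. t * K2f s w (1+t) - K1f s w (1+t)" and g'="\<lambda>t. - 3 * c * t^2"])
    fix x assume x: "0 \<le> x" "x \<le> t"
    have "((\<lambda>t. t * K1f s w (1+t) - 2 * Kf s w (1+t)) has_real_derivative
        (x * K2f s w (1+x) + 1 * K1f s w (1+x) - 2 * K1f s w (1+x))) (at x)"
      by (rule DERIV_diff[OF DERIV_mult'[OF DERIV_ident dK1_s] DERIV_cmult[OF dK_s]]) (use x in auto)
    thus "((\<lambda>t. t * K1f s w (1+t) - 2 * Kf s w (1+t)) has_real_derivative x * K2f s w (1+x) - K1f s w (1+x)) (at x)"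
      by simp
    show "((\<lambda>t. - c * t^3) has_real_derivative - 3 * c * x^2) (at x)"
      by (auto intro!: derivative_eq_intros simp: eval_nat_numeral)
    show "x * K2f s w (1+x) - K1f s w (1+x) \<le> - 3 * c * x^2" using x assms by (intro T_D1) auto
  qed (use assms in \<open>auto simp: K_at1\<close>)
  thus ?thesis by simp
qed

lemma K_lower:
  assumes m: "0 \<le> m" "m \<le> M" "M < r" and KM: "Kf s w (1+M) \<ge> 0"
  shows "Kf s w (1+m) \<ge> c * m^2 * (M - m)"
proof (cases "m = 0")
  case True thus ?thesis by (simp add: K_at1)
next
  case False
  hence mp: "m > 0" using m by simp
  let ?f = "\<lambda>t. Kf s w (1+t) / t^2 + c * t"
  have "?f M \<le> (\<lambda>t. ?f m) M"
  proof (rule cmp[where a=m and f="?f" and g="\<lambda>t. ?f m"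
       and f'="\<lambda>t. (K1f s w (1+t) * t^2 - Kf s w (1+t) * (2 * t)) / (t^2 * t^2) + c"
       and g'="\<lambda>t. 0"])
    fix x assume x: "m \<le> x" "x \<le> M"
    have xp: "x > 0" using x mp by simp
    have "((\<lambda>t. t^2) has_real_derivative 2 * x) (at x)"
      by (auto intro!: derivative_eq_intros)
    from DERIV_divide[OF dK_s this] xp
    have "((\<lambda>t. Kf s w (1+t) / t^2) has_real_derivative
           (K1f s w (1+x) * x^2 - Kf s w (1+x) * (2 * x)) / (x^2 * x^2)) (at x)"
      by simp
    from DERIV_add[OF this DERIV_cmult[OF DERIV_ident, of c]]
    show "(?f has_real_derivative (K1f s w (1+x) * x^2 - Kf s w (1+x) * (2 * x)) / (x^2 * x^2) + c) (at x)"
      by simp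
    show "((\<lambda>t. ?f m) has_real_derivative 0) (at x)" by simp
    have D: "x * K1f s w (1+x) - 2 * Kf s w (1+x) \<le> - c * x^3"
      using x m mp by (intro T_D) auto
    have "K1f s w (1+x) * x^2 - Kf s w (1+x) * (2 * x) = x * (x * K1f s w (1+x) - 2 * Kf s w (1+x))"
      by (simp add: algebra_simps power2_eq_square)
    also have "\<dots> \<le> x * (- c * x^3)" using D xp by (intro mult_left_mono) auto
    finally have "(K1f s w (1+x) * x^2 - Kf s w (1+x) * (2 * x)) / (x^2 * x^2) \<le> - c"
      using xp by (simp add: divide_simps eval_nat_numeral algebra_simps)
    thus "(K1f s w (1+x) * x^2 - Kf s w (1+x) * (2 * x)) / (x^2 * x^2) + c \<le> 0" by simp
  qed (use m in auto)
  hence "Kf s w (1+M) / M^2 + c * M \<le> Kf s w (1+m) / m^2 + c * m" by simp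
  moreover have "Kf s w (1+M) / M^2 \<ge> 0" using KM by simp
  ultimately have "c * (M - m) \<le> Kf s w (1+m) / m^2" by (simp add: algebra_simps)
  thus ?thesis using mp by (simp add: field_simps)
qed

end



lemma decay_core:
  fixes m m' :: "real \<Rightarrow> real" and k e A \<delta> \<xi> :: real
  assumes der: "\<And>x. (m has_real_derivative m' x) (at x)"
    and dec: "\<And>x y. 0 \<le> x \<Longrightarrow> x < y \<Longrightarrow> m y < m x"
    and bnd: "\<And>x. 0 < x \<Longrightarrow> (m' x)^2 \<ge> k * (m x)^2 * (m 0 - m x) / e"
    and k: "k > 0" and e: "e > 0" and \<delta>: "\<delta> > 0" and A: "A > 0"
    and MA: "m 0 \<le> A * e" and big: "m 0 > \<delta> * e"
    and \<xi>: "\<xi> \<ge> sqrt (8/(k*\<delta>)) + sqrt (A/(k*\<delta>^2))"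
  shows "m \<xi> \<le> \<delta> * e"
proof -
  define M where "M = m 0"
  define T1 where "T1 = sqrt (8/(k*\<delta>))"
  define T2 where "T2 = sqrt (A/(k*\<delta>^2))"
  have T1p: "T1 > 0" and T2p: "T2 > 0" using k \<delta> A by (auto simp: T1_def T2_def)
  have T1sq: "T1^2 = 8/(k*\<delta>)" using k \<delta> by (simp add: T1_def)
  have T2sq: "T2^2 = A/(k*\<delta>^2)" using k \<delta> A by (simp add: T2_def)
  have Mp: "M > 0" using big \<delta> e M_def by (smt (verit) mult_pos_pos)
  have contm: "continuous_on S m" for S
    using der by (meson DERIV_isCont continuous_at_imp_continuous_on)
  have ph1: "m T1 < M/2"
  proof (rule ccontr)
    assume "\<not> m T1 < M/2"
    hence mT1: "m T1 \<ge> M/2" by simp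
    define g where "g x = sqrt (M - m x)" for x
    have pos: "M - m x > 0" if "x > 0" for x using dec[of 0 x] that M_def by simp
    have dg: "(g has_real_derivative (- m' x) / (2 * sqrt (M - m x))) (at x)" if "x > 0" for x
    proof -
      have "((\<lambda>x. M - m x) has_real_derivative - m' x) (at x)"
        using der[of x] by (auto intro!: derivative_eq_intros)
      from DERIV_chain2[where f=sqrt and g="\<lambda>x. M - m x", OF DERIV_real_sqrt[OF pos[OF that]] this]
      show ?thesis unfolding g_def by (simp add: field_simps)
    qed
    have "continuous_on {0..T1} g" unfolding g_def
      by (intro continuous_intros contm)
    then obtain l z where z: "0 < z" "z < T1" "(g has_real_derivative l) (at z)" "g T1 - g 0 = (T1 - 0) * l"
      using MVT[OF T1p] dg by (metis real_differentiable_def)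
    have l: "l = (- m' z) / (2 * sqrt (M - m z))" using DERIV_unique[OF z(3) dg[OF z(1)]] .
    have g0: "g 0 = 0" by (simp add: g_def M_def)
    have "M - m T1 = (g T1)^2" using pos[OF T1p] by (simp add: g_def)
    also have "\<dots> = T1^2 * l^2" using z(4) g0 by (simp add: power_mult_distrib)
    also have "l^2 = (m' z)^2 / (4 * (M - m z))"
      using l pos[OF z(1)] by (simp add: power_divide power_mult_distrib)
    finally have eq: "M - m T1 = T1^2 * ((m' z)^2 / (4 * (M - m z)))" .
    have mz: "m z \<ge> M/2" using dec[of z T1] z mT1 by simp
    have "(m' z)^2 \<ge> k * (m z)^2 * (M - m z) / e" using bnd[OF z(1)] M_def by simp
    hence "(m' z)^2 / (4 * (M - m z)) \<ge> k * (m z)^2 / (4 * e)"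
      using pos[OF z(1)] e by (simp add: field_simps)
    moreover have "(m z)^2 \<ge> (M/2)^2" using mz Mp by (intro power_mono) auto
    ultimately have "(m' z)^2 / (4 * (M - m z)) \<ge> k * (M/2)^2 / (4 * e)"
      using k e by (smt (verit, best) divide_right_mono mult_left_mono)
    hence "M - m T1 \<ge> T1^2 * (k * (M/2)^2 / (4 * e))"
      using eq T1p by (metis mult_left_mono zero_le_power2)
    also have "T1^2 * (k * (M/2)^2 / (4 * e)) = M^2 / (2 * \<delta> * e)"
      using T1sq k \<delta> e by (simp add: field_simps power2_eq_square)
    finally have "M^2 / (2 * \<delta> * e) \<le> M/2" using mT1 by simp
    hence "M^2 \<le> M * (\<delta> * e)" using \<delta> e by (simp add: field_simps)
    hence "M \<le> \<delta> * e" using Mp by (simp add: power2_eq_square)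
    thus False using big M_def by simp
  qed
  show ?thesis
  proof (rule ccontr)
    assume "\<not> m \<xi> \<le> \<delta> * e"
    hence mxi: "m \<xi> > \<delta> * e" by simp
    have "T1 + T2 \<le> \<xi>" using \<xi> T1_def T2_def by simp
    hence lt: "T1 < \<xi>" using T2p by linarith
    obtain z where z: "T1 < z" "z < \<xi>" "m \<xi> - m T1 = (\<xi> - T1) * m' z"
      using MVT2[OF lt, of m m'] der by blast
    have z0: "z > 0" using z T1p by simp
    have mz1: "m z > \<delta> * e" using dec[of z \<xi>] z z0 mxi by simp
    have mz2: "m z < M/2" using dec[of T1 z] z T1p ph1 by simp
    have "(m' z)^2 \<ge> k * (m z)^2 * (M - m z) / e" using bnd[OF z0] M_def by simp
    moreover have "(m z)^2 \<ge> (\<delta> * e)^2" using mz1 \<delta> e by (intro power_mono) auto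
    hence "k * (m z)^2 * (M - m z) / e \<ge> k * (\<delta> * e)^2 * (M/2) / e"
      using mz2 k e Mp by (intro divide_right_mono mult_mono) (auto intro: mult_left_mono)
    ultimately have mp2: "(m' z)^2 \<ge> k * (\<delta> * e)^2 * (M/2) / e" by simp
    have "(\<xi> - T1)^2 \<ge> T2^2" using \<open>T1 + T2 \<le> \<xi>\<close> T2p by (intro power_mono) auto
    have "m T1 - m \<xi> = - ((\<xi> - T1) * m' z)" using z(3) by simp
    hence "(m T1 - m \<xi>)^2 = (\<xi> - T1)^2 * (m' z)^2" by (simp add: power_mult_distrib)
    also have "\<dots> \<ge> T2^2 * (k * (\<delta> * e)^2 * (M/2) / e)"
      using \<open>(\<xi> - T1)^2 \<ge> T2^2\<close> mp2 k e Mp by (intro mult_mono) auto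
    also have "T2^2 * (k * (\<delta> * e)^2 * (M/2) / e) = A * e * M / 2"
      using T2sq k \<delta> e by (simp add: field_simps power2_eq_square)
    finally have ge: "(m T1 - m \<xi>)^2 \<ge> A * e * M / 2" .
    have "m T1 - m \<xi> < M/2" using ph1 mxi \<delta> e by (smt (verit) mult_pos_pos)
    moreover have "m T1 - m \<xi> > 0" using dec[of T1 \<xi>] lt T1p by simp
    ultimately have "(m T1 - m \<xi>)^2 < (M/2)^2" by (intro power_strict_mono) auto
    with ge have "A * e * M / 2 < (M/2)^2" by linarith
    hence "A * e * M / 2 < M^2 / 4" by (simp add: power_divide)
    moreover have "M * M \<le> A * e * M" using MA M_def Mp by (intro mult_right_mono) auto
    ultimately show False using Mp by (simp add: power2_eq_square)
  qed
qed




lemma smooth_D: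
  assumes "smooth_real f"
  shows "(f has_real_derivative deriv f x) (at x)" "(deriv f has_real_derivative deriv (deriv f) x) (at x)"
proof -
  have "((deriv ^^ 0) f) differentiable (at x)" "((deriv ^^ 1) f) differentiable (at x)"
    using assms unfolding smooth_real_def by blast+
  thus "(f has_real_derivative deriv f x) (at x)" "(deriv f has_real_derivative deriv (deriv f) x) (at x)"
    by (simp_all add: DERIV_deriv_iff_real_differentiable)
qed

lemma const_lim:
  fixes f :: "real \<Rightarrow> real"
  assumes "\<And>x. (f has_real_derivative 0) (at x)" "(f \<longlongrightarrow> L) at_top"
  shows "f x = L"
proof -
  have "f = (\<lambda>_::real. f 0)" using DERIV_isconst_all assms(1) by blast
  have "((\<lambda>_::real. f 0) \<longlongrightarrow> L) at_top" using assms(2) by (subst (asm) \<open>f = (\<lambda>_::real. f 0)\<close>) assumption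
  hence "f 0 = L" by (simp add: tendsto_const_iff)
  thus ?thesis using \<open>f = (\<lambda>_::real. f 0)\<close> by metis
qed

lemma sw_facts:
  fixes \<sigma> \<gamma> \<epsilon> :: real and n u \<phi> :: "real \<Rightarrow> real"
  assumes sw: "solitary_wave \<sigma> \<gamma> \<epsilon> n u \<phi>" and ep: "\<epsilon> > 0" and sg: "\<sigma> \<ge> 0" and gp: "\<gamma> > 0"
  shows "\<And>x. (n has_real_derivative deriv n x) (at x)"
    and "\<And>x y. 0 \<le> x \<Longrightarrow> x < y \<Longrightarrow> n y < n x"
    and "\<And>x. x > 0 \<Longrightarrow> n x > 1"
    and "(n \<longlongrightarrow> 1) at_top"
    and "\<And>x. \<epsilon> * (G1f \<sigma> ((sqrt (1+\<sigma>) + \<gamma>*\<epsilon>)^2) (n x))^2 * (deriv n x)^2 / 2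
             = Kf \<sigma> ((sqrt (1+\<sigma>) + \<gamma>*\<epsilon>)^2) (n x)"
proof -
  define W where "W = sqrt (1+\<sigma>) + \<gamma>*\<epsilon>"
  define w where "w = W^2"
  have Wp: "W > 0" using ep gp sg by (simp add: W_def add_pos_nonneg)
  have tw: "tw_solution \<sigma> \<gamma> \<epsilon> n u \<phi>" and mono: "strict_antimono_on {0<..} n"
    using sw unfolding solitary_wave_def by auto
  have smn: "smooth_real n" and smu: "smooth_real u" and smp: "smooth_real \<phi>"
    and npos: "\<And>x. n x > 0"
    and e1: "\<And>x. - W * deriv n x + deriv (\<lambda>y. n y * u y) x = 0"
    and e2: "\<And>x. - W * deriv u x + u x * deriv u x + \<sigma> * deriv n x / n x = - deriv \<phi> x"
    and e3: "\<And>x. \<epsilon> * deriv (deriv \<phi>) x = exp (\<phi> x) - n x"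
    and ln1: "(n \<longlongrightarrow> 1) at_top" and lu: "(u \<longlongrightarrow> 0) at_top" and lp: "(\<phi> \<longlongrightarrow> 0) at_top"
    using tw unfolding tw_solution_def Let_def W_def by auto
  note dn = smooth_D(1)[OF smn] and du = smooth_D(1)[OF smu] and dp = smooth_D(1)[OF smp]
    and ddp = smooth_D(2)[OF smp]
  show "\<And>x. (n has_real_derivative deriv n x) (at x)" by (rule dn)
  show "(n \<longlongrightarrow> 1) at_top" by (rule ln1)
  have mono': "n y < n x" if "0 < x" "x < y" for x y
    using mono that unfolding monotone_on_def by auto
  have contn: "isCont n x" for x using dn DERIV_isCont by blast
  have le0: "n y \<le> n 0" if "y > 0" for y
  proof (rule ccontr)
    assume "\<not> n y \<le> n 0"
    hence gt: "n y > n 0" by simp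
    from contn[of 0] have "(n \<longlongrightarrow> n 0) (at 0)" by (simp add: isCont_def)
    hence "eventually (\<lambda>z. n z < n y) (at 0)" using gt order_tendstoD(2) by blast
    then obtain d where d: "d > 0" "\<And>z. z \<noteq> 0 \<Longrightarrow> dist z 0 < d \<Longrightarrow> n z < n y"
      unfolding eventually_at by blast
    define z where "z = min (d/2) (y/2)"
    have "z > 0" "z < y" "dist z 0 < d" using d that by (auto simp: z_def dist_real_def)
    hence "n z < n y" "n y < n z" using d(2)[of z] mono'[of z y] by auto
    thus False by simp
  qed
  show dec: "\<And>x y. 0 \<le> x \<Longrightarrow> x < y \<Longrightarrow> n y < n x"
  proof -
    fix x y :: real assume xy: "0 \<le> x" "x < y"
    show "n y < n x"
    proof (cases "x = 0")
      case True
      thus ?thesis using mono'[of "y/2" y] le0[of "y/2"] xy by simp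
    qed (use xy mono' in auto)
  qed
  have ge1: "n y \<ge> 1" if "y > 0" for y
  proof -
    have "eventually (\<lambda>z. n z \<le> n y) at_top"
      unfolding eventually_at_top_linorder using dec that
      by (intro exI[of _ "y+1"]) (auto intro: less_imp_le)
    from tendsto_upperbound[OF ln1 this] show ?thesis by simp
  qed
  show "\<And>x. x > 0 \<Longrightarrow> n x > 1"
  proof -
    fix x :: real assume "x > 0"
    hence "n (x+1) \<ge> 1" "n (x+1) < n x" using ge1[of "x+1"] dec[of x "x+1"] by auto
    thus "n x > 1" by simp
  qed
  have dnu: "((\<lambda>y. n y * u y) has_real_derivative deriv (\<lambda>y. n y * u y) x) (at x)" for x
    using DERIV_mult[OF dn du] by (metis DERIV_imp_deriv)
  have I1: "n x * u x - W * n x = -W" for x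
  proof (rule const_lim[where f="\<lambda>x. n x * u x - W * n x"])
    fix x
    have "((\<lambda>x. n x * u x - W * n x) has_real_derivative deriv (\<lambda>y. n y * u y) x - W * deriv n x) (at x)"
      by (intro DERIV_diff DERIV_cmult dnu dn)
    thus "((\<lambda>x. n x * u x - W * n x) has_real_derivative 0) (at x)" using e1[of x] by simp
  next
    have "((\<lambda>x. n x * u x - W * n x) \<longlongrightarrow> 1 * 0 - W * 1) at_top"
      by (intro tendsto_intros ln1 lu)
    thus "((\<lambda>x. n x * u x - W * n x) \<longlongrightarrow> - W) at_top" by simp
  qed
  have uform: "u x = W - W / n x" for x
    using I1[of x] npos[of x] by (simp add: field_simps)
  have I2: "- W * u x + (u x)^2 / 2 + \<sigma> * ln (n x) + \<phi> x = 0" for x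
  proof (rule const_lim[where f="\<lambda>x. - W * u x + (u x)^2 / 2 + \<sigma> * ln (n x) + \<phi> x"])
    fix x
    have "((\<lambda>x. - W * u x + (u x)^2 / 2 + \<sigma> * ln (n x) + \<phi> x) has_real_derivative
        - W * deriv u x + u x * deriv u x + \<sigma> * (deriv n x / n x) + deriv \<phi> x) (at x)"
      apply (rule derivative_eq_intros du dn dp refl | use npos[of x] in simp)+
      done
    thus "((\<lambda>x. - W * u x + (u x)^2 / 2 + \<sigma> * ln (n x) + \<phi> x) has_real_derivative 0) (at x)"
      using e2[of x] by simp
  next
    have "((\<lambda>x. - W * u x + (u x)^2 / 2 + \<sigma> * ln (n x) + \<phi> x) \<longlongrightarrow> - W * 0 + 0^2/2 + \<sigma> * ln 1 + 0) at_top"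
      by (intro tendsto_intros ln1 lu lp) simp_all
    thus "((\<lambda>x. - W * u x + (u x)^2 / 2 + \<sigma> * ln (n x) + \<phi> x) \<longlongrightarrow> 0) at_top" by simp
  qed
  have phiG: "\<phi> x = Gf \<sigma> w (n x)" for x
  proof -
    have "\<phi> x = W * u x - (u x)^2 / 2 - \<sigma> * ln (n x)" using I2[of x] by simp
    also have "\<dots> = Gf \<sigma> w (n x)"
      unfolding uform Gf_def w_def using npos[of x]
      by (simp add: field_simps power2_eq_square)
    finally show ?thesis .
  qed
  have dphi: "deriv \<phi> x = G1f \<sigma> w (n x) * deriv n x" for x
  proof -
    have "((\<lambda>y. Gf \<sigma> w (n y)) has_real_derivative G1f \<sigma> w (n x) * deriv n x) (at x)"
      by (rule DERIV_chain2[OF dG[OF npos] dn])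
    moreover have "(\<lambda>y. Gf \<sigma> w (n y)) = \<phi>" using phiG by auto
    ultimately show ?thesis using dp DERIV_unique by metis
  qed
  define E where "E y = \<epsilon> * (deriv \<phi> y)^2 / 2 - exp (\<phi> y) - w / n y - \<sigma> * n y" for y
  have dE: "(E has_real_derivative 0) (at x)" for x
  proof -
    have "(E has_real_derivative \<epsilon> * (2 * deriv \<phi> x * deriv (deriv \<phi>) x) / 2 - exp (\<phi> x) * deriv \<phi> x
        + w * deriv n x / (n x)^2 - \<sigma> * deriv n x) (at x)"
      unfolding E_def
      apply (rule derivative_eq_intros dn dp ddp refl | use npos[of x] in \<open>simp add: power2_eq_square\<close>)+
      done
    moreover have "\<epsilon> * (2 * deriv \<phi> x * deriv (deriv \<phi>) x) / 2 - exp (\<phi> x) * deriv \<phi> x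
        + w * deriv n x / (n x)^2 - \<sigma> * deriv n x = 0"
    proof -
      have "\<epsilon> * (2 * deriv \<phi> x * deriv (deriv \<phi>) x) / 2 = deriv \<phi> x * (\<epsilon> * deriv (deriv \<phi>) x)" by simp
      also have "\<dots> = deriv \<phi> x * (exp (\<phi> x) - n x)" using e3[of x] by simp
      finally have h: "\<epsilon> * (2 * deriv \<phi> x * deriv (deriv \<phi>) x) / 2 = deriv \<phi> x * (exp (\<phi> x) - n x)" .
      have k: "n x * G1f \<sigma> w (n x) = w / (n x)^2 - \<sigma>"
        using npos[of x] unfolding G1f_def by (simp add: field_simps power2_eq_square power3_eq_cube)
      have "deriv \<phi> x * (exp (\<phi> x) - n x) - exp (\<phi> x) * deriv \<phi> x + w * deriv n x / (n x)^2 - \<sigma> * deriv n x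
          = deriv n x * (w / (n x)^2 - \<sigma> - n x * G1f \<sigma> w (n x))"
        unfolding dphi by (simp add: algebra_simps)
      also have "\<dots> = 0" using k by simp
      finally show ?thesis unfolding h .
    qed
    ultimately show ?thesis by simp
  qed
  define L where "L = E 0 + 1 + w + \<sigma>"
  have Eform: "\<epsilon> * (deriv \<phi> x)^2 / 2 = Kf \<sigma> w (n x) + L" for x
  proof -
    have "E x = E 0" using DERIV_isconst_all dE by blast
    thus ?thesis unfolding L_def E_def Kf_def phiG[symmetric] using npos[of x]
      by (simp add: field_simps)
  qed
  have Kcont: "isCont (Kf \<sigma> w) 1" unfolding Kf_def Gf_def by (auto intro!: continuous_intros)
  have "((\<lambda>x. Kf \<sigma> w (n x)) \<longlongrightarrow> Kf \<sigma> w 1) at_top"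
    by (rule isCont_tendsto_compose[OF Kcont ln1])
  hence KL: "((\<lambda>x. Kf \<sigma> w (n x)) \<longlongrightarrow> 0) at_top" by (simp add: K_at1)
  have limE: "((\<lambda>x. \<epsilon> * (deriv \<phi> x)^2 / 2) \<longlongrightarrow> L) at_top"
  proof -
    have eq: "(\<lambda>x. \<epsilon> * (deriv \<phi> x)^2 / 2) = (\<lambda>x. Kf \<sigma> w (n x) + L)" using Eform by auto
    show ?thesis unfolding eq using tendsto_add[OF KL tendsto_const[of L]] by simp
  qed
  have L0: "L \<ge> 0"
    by (rule tendsto_lowerbound[OF limE]) (auto simp: ep less_imp_le)
  have "L = 0"
  proof (rule ccontr)
    assume "L \<noteq> 0"
    hence Lp: "L > 0" using L0 by simp
    have "eventually (\<lambda>x. \<epsilon> * (deriv \<phi> x)^2 / 2 > L/2) at_top"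
      using order_tendstoD(1)[OF limE, of "L/2"] Lp by linarith
    then obtain X1 where X1: "\<And>x. x \<ge> X1 \<Longrightarrow> \<epsilon> * (deriv \<phi> x)^2 / 2 > L/2"
      unfolding eventually_at_top_linorder by blast
    have "eventually (\<lambda>x. dist (\<phi> x) 0 < 1) at_top"
      using tendstoD[OF lp] by simp
    then obtain X2 where X2: "\<And>x. x \<ge> X2 \<Longrightarrow> \<bar>\<phi> x\<bar> < 1"
      unfolding eventually_at_top_linorder dist_real_def by auto
    define X where "X = max X1 X2"
    define t where "t = 2 * sqrt (\<epsilon> / L)"
    have tp: "t > 0" using ep Lp by (simp add: t_def)
    have t2: "t^2 = 4 * \<epsilon> / L" using ep Lp by (simp add: t_def power_mult_distrib)
    obtain z where z: "X < z" "z < X + t" "\<phi> (X + t) - \<phi> X = (X + t - X) * deriv \<phi> z"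
      using MVT2[of X "X+t" \<phi> "deriv \<phi>"] tp dp by auto
    have "(deriv \<phi> z)^2 > L / \<epsilon>" using X1[of z] z X_def ep by (simp add: field_simps)
    hence "t^2 * (deriv \<phi> z)^2 > t^2 * (L / \<epsilon>)" using tp by (intro mult_strict_left_mono) auto
    also have "t^2 * (L / \<epsilon>) = 4" using t2 ep Lp by simp
    finally have "(\<phi> (X + t) - \<phi> X)^2 > 4" using z(3) by (simp add: power_mult_distrib)
    moreover have "\<bar>\<phi> (X + t)\<bar> < 1" "\<bar>\<phi> X\<bar> < 1" using X2 X_def tp by auto
    moreover have "\<bar>\<phi> (X + t) - \<phi> X\<bar> < 2" using calculation(2,3) by arith
    hence "\<bar>\<phi> (X + t) - \<phi> X\<bar>^2 < 2^2" by (intro power_strict_mono) auto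
    ultimately show False by simp
  qed
  show "\<And>x. \<epsilon> * (G1f \<sigma> ((sqrt (1+\<sigma>) + \<gamma>*\<epsilon>)^2) (n x))^2 * (deriv n x)^2 / 2
             = Kf \<sigma> ((sqrt (1+\<sigma>) + \<gamma>*\<epsilon>)^2) (n x)"
    using Eform \<open>L = 0\<close> unfolding dphi w_def W_def by (simp add: power_mult_distrib mult.assoc)
qed




theorem lemma4p2:
  fixes \<sigma> \<gamma> :: real
  assumes "\<sigma> \<ge> 0" and "\<gamma> > 0"
  shows "\<exists>\<epsilon>0 > 0. \<exists>\<delta>1 > 0. \<forall>\<delta>. 0 < \<delta> \<and> \<delta> < \<delta>1 \<longrightarrow>
           (\<exists>\<xi>\<delta> > 0. \<forall>\<xi> \<epsilon> n u \<phi>. \<xi> \<ge> \<xi>\<delta> \<and> 0 < \<epsilon> \<and> \<epsilon> < \<epsilon>0 \<and>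
               solitary_wave \<sigma> \<gamma> \<epsilon> n u \<phi> \<longrightarrow>
               0 < (n \<xi> - 1) / \<epsilon> \<and> (n \<xi> - 1) / \<epsilon> \<le> \<delta>)"
proof -
  define V where "V = sqrt (1+\<sigma>)"
  have V2: "V^2 = 1 + \<sigma>" using assms(1) by (simp add: V_def)
  have Vp: "V > 0" using assms(1) by (simp add: V_def)
  obtain r where r: "r > 0" "r \<le> 1/2" and rn: "\<And>w x. \<bar>w - (1+\<sigma>)\<bar> < r \<Longrightarrow> \<bar>x-1\<bar> < r \<Longrightarrow>
      K3f \<sigma> w x < -(1+\<sigma>) \<and> (G1f \<sigma> w x)^2 < 4"
    using nbhd[OF assms(1)] by blast
  define c0 where "c0 = (1+\<sigma>)/6"
  have c0p: "c0 > 0" using assms(1) by (simp add: c0_def)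
  define \<beta> where "\<beta> = 2*V*\<gamma> + \<gamma>^2"
  have \<beta>p: "\<beta> > 0" using Vp assms(2) unfolding \<beta>_def by (intro add_pos_pos mult_pos_pos) auto
  define \<epsilon>0 where "\<epsilon>0 = min 1 (min (r/(2*\<beta>)) (r*c0/(4*\<beta>)))"
  have \<epsilon>0p: "\<epsilon>0 > 0" using r \<beta>p c0p by (simp add: \<epsilon>0_def)
  define A where "A = \<beta> / c0"
  have Ap: "A > 0" using \<beta>p c0p by (simp add: A_def)
  define k where "k = c0 / 2"
  have kp: "k > 0" using c0p by (simp add: k_def)
  have main: "(n \<xi> - 1) / \<epsilon> \<le> \<delta> \<and> 0 < (n \<xi> - 1) / \<epsilon>"
    if \<delta>: "\<delta> > 0" and \<xi>: "\<xi> \<ge> sqrt (8/(k*\<delta>)) + sqrt (A/(k*\<delta>^2)) + 1"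
      and ep: "0 < \<epsilon>" "\<epsilon> < \<epsilon>0" and sw: "solitary_wave \<sigma> \<gamma> \<epsilon> n u \<phi>" for \<delta> \<xi> \<epsilon> n u \<phi>
  proof -
    define w where "w = (V + \<gamma> * \<epsilon>)^2"
    have e1: "\<epsilon> \<le> 1" "\<beta> * \<epsilon> < r/2" "\<beta> * \<epsilon> < r * c0 / 4"
    proof -
      have "\<epsilon> < 1" "\<epsilon> < r/(2*\<beta>)" "\<epsilon> < r*c0/(4*\<beta>)" using ep by (auto simp: \<epsilon>0_def)
      thus "\<epsilon> \<le> 1" "\<beta> * \<epsilon> < r/2" "\<beta> * \<epsilon> < r * c0 / 4" using \<beta>p by (auto simp: field_simps)
    qed
    have wd: "w - (1+\<sigma>) = 2*V*\<gamma>*\<epsilon> + \<gamma>^2*\<epsilon>^2"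
      unfolding w_def using V2 by (simp add: power2_eq_square algebra_simps)
    have "\<epsilon> * \<epsilon> \<le> 1 * \<epsilon>" using e1(1) ep by (intro mult_right_mono) auto
    hence "\<gamma>^2*\<epsilon>^2 \<le> \<gamma>^2*\<epsilon>" by (intro mult_left_mono) (auto simp: power2_eq_square)
    hence wb2: "w - (1+\<sigma>) \<le> \<beta> * \<epsilon>"
      using wd by (simp add: \<beta>_def algebra_simps)
    have "0 < 2*V*\<gamma>*\<epsilon> + \<gamma>^2*\<epsilon>^2" using Vp assms(2) ep
      by (intro add_pos_nonneg mult_pos_pos) auto
    hence wb: "0 < w - (1+\<sigma>)" "w - (1+\<sigma>) \<le> \<beta> * \<epsilon>" using wd wb2 by auto
    have wr: "\<bar>w - (1+\<sigma>)\<bar> < r" using wb e1 r by simp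
    have K3b: "\<And>x. 1 \<le> x \<Longrightarrow> x < 1 + r \<Longrightarrow> K3f \<sigma> w x \<le> - 6 * c0"
    proof -
      fix x :: real assume "1 \<le> x" "x < 1 + r"
      hence "\<bar>x - 1\<bar> < r" by simp
      from rn[OF wr this] show "K3f \<sigma> w x \<le> - 6 * c0" by (simp add: c0_def)
    qed
    have G1b: "\<And>x. 1 \<le> x \<Longrightarrow> x < 1 + r \<Longrightarrow> (G1f \<sigma> w x)^2 < 4"
    proof -
      fix x :: real assume "1 \<le> x" "x < 1 + r"
      hence "\<bar>x - 1\<bar> < r" by simp
      from rn[OF wr this] show "(G1f \<sigma> w x)^2 < 4" by simp
    qed
    have K2b: "K2f \<sigma> w 1 \<le> 2 * \<beta> * \<epsilon>"
    proof -
      have "K2f \<sigma> w 1 = (w - \<sigma>) * (w - (1+\<sigma>))" by (simp add: K_at1)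
      also have "\<dots> \<le> 2 * (\<beta> * \<epsilon>)" using wb wr r by (intro mult_mono) auto
      finally show ?thesis by simp
    qed
    note TK = T_K[where s=\<sigma> and w=w and r=r and c=c0, OF r(1) r(2) K3b]
    note KL = K_lower[where s=\<sigma> and w=w and r=r and c=c0, OF r(1) r(2) K3b]
    note F = sw_facts[OF sw ep(1) assms(1) assms(2), folded V_def, folded w_def]
    have Knn: "Kf \<sigma> w (n x) \<ge> 0" for x
    proof -
      have "0 \<le> \<epsilon> * (G1f \<sigma> w (n x))^2 * (deriv n x)^2 / 2" using ep by simp
      thus ?thesis using F(5)[of x] by simp
    qed
    define M where "M = n 0 - 1"
    have Mp: "M > 0" using F(2)[of 0 1] F(3)[of 1] by (simp add: M_def)
    have Mr: "M < r"
    proof (rule ccontr)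
      assume "\<not> M < r"
      hence Mr: "M \<ge> r" by simp
      have "eventually (\<lambda>x. n x < 1 + r/2) at_top"
        using order_tendstoD(2)[OF F(4), of "1 + r/2"] r by simp
      then obtain X where X: "\<And>x. x \<ge> X \<Longrightarrow> n x < 1 + r/2"
        unfolding eventually_at_top_linorder by blast
      define Y where "Y = max X 0"
      have "n Y \<le> 1 + r/2" using X[of Y] by (simp add: Y_def)
      moreover have "1 + r/2 \<le> n 0" using Mr r M_def by simp
      moreover have "\<forall>x. 0 \<le> x \<and> x \<le> Y \<longrightarrow> isCont n x" using F(1) DERIV_isCont by blast
      ultimately obtain x where "n x = 1 + r/2" using IVT2[of n Y "1 + r/2" 0] Y_def by auto
      hence "Kf \<sigma> w (1 + r/2) \<ge> 0" using Knn[of x] by simp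
      moreover have "Kf \<sigma> w (1 + r/2) \<le> K2f \<sigma> w 1 * (r/2)^2 / 2 - c0 * (r/2)^3"
        using TK[of "r/2"] r by simp
      moreover have "K2f \<sigma> w 1 * (r/2)^2 / 2 - c0 * (r/2)^3 < 0"
      proof -
        have rc: "0 < r * c0" using r c0p by simp
        have "c0 * (r/2) = (r * c0)/2" by simp
        hence "K2f \<sigma> w 1 / 2 < c0 * (r/2)" using K2b e1(3) rc by linarith
        hence "(r/2)^2 * (K2f \<sigma> w 1 / 2) < (r/2)^2 * (c0 * (r/2))" using r by (intro mult_strict_left_mono) auto
        moreover have "K2f \<sigma> w 1 * (r/2)^2 / 2 = (r/2)^2 * (K2f \<sigma> w 1 / 2)" by simp
        moreover have "c0 * (r/2)^3 = (r/2)^2 * (c0 * (r/2))" by (simp add: power3_eq_cube power2_eq_square)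
        ultimately show ?thesis by linarith
      qed
      ultimately show False by simp
    qed
    have MA: "M \<le> A * \<epsilon>"
    proof -
      have "0 \<le> Kf \<sigma> w (1 + M)" using Knn[of 0] M_def by simp
      also have "\<dots> \<le> K2f \<sigma> w 1 * M^2 / 2 - c0 * M^3" using TK[of M] Mp Mr by simp
      finally have "c0 * M^3 \<le> K2f \<sigma> w 1 * M^2 / 2" by simp
      moreover have "K2f \<sigma> w 1 * M^2 / 2 = M^2 * (K2f \<sigma> w 1 / 2)" by simp
      moreover have "c0 * M^3 = M^2 * (c0 * M)" by (simp add: power3_eq_cube power2_eq_square)
      ultimately have "M^2 * (c0 * M) \<le> M^2 * (K2f \<sigma> w 1 / 2)" by linarith
      hence "c0 * M \<le> K2f \<sigma> w 1 / 2" using Mp by simp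
      also have "\<dots> \<le> \<beta> * \<epsilon>" using K2b by simp
      finally have "c0 * M \<le> \<beta> * \<epsilon>" .
      hence "M \<le> (\<beta> * \<epsilon>) / c0" using c0p by (simp add: pos_le_divide_eq mult.commute)
      thus ?thesis by (simp add: A_def)
    qed
    define m where "m x = n x - 1" for x
    have m0: "m 0 = M" by (simp add: m_def M_def)
    have mder: "(m has_real_derivative deriv n x) (at x)" for x
      unfolding m_def using F(1)[of x] by (auto intro!: derivative_eq_intros)
    have mdec: "m y < m x" if "0 \<le> x" "x < y" for x y using F(2)[OF that] by (simp add: m_def)
    have bnd: "(deriv n x)^2 \<ge> k * (m x)^2 * (m 0 - m x) / \<epsilon>" if "0 < x" for x
    proof -
      have mx: "0 < m x" "m x < M" using F(3)[OF that] mdec[of 0 x] that m0 by (auto simp: m_def)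
      have "c0 * (m x)^2 * (M - m x) \<le> Kf \<sigma> w (1 + m x)"
        using KL[of "m x" M] mx Mr Knn[of 0] M_def by simp
      also have "\<dots> = \<epsilon> * (G1f \<sigma> w (n x))^2 * (deriv n x)^2 / 2" using F(5)[of x] by (simp add: m_def)
      also have "\<dots> \<le> \<epsilon> * 4 * (deriv n x)^2 / 2"
      proof -
        have "(G1f \<sigma> w (n x))^2 < 4" using G1b[of "n x"] mx Mr by (simp add: m_def)
        thus ?thesis using ep by (intro divide_right_mono mult_right_mono mult_left_mono) auto
      qed
      finally have "c0 * (m x)^2 * (M - m x) \<le> 2 * \<epsilon> * (deriv n x)^2" by simp
      hence "k * (m x)^2 * (M - m x) \<le> \<epsilon> * (deriv n x)^2" by (simp add: k_def)
      hence "k * (m x)^2 * (M - m x) / \<epsilon> \<le> (deriv n x)^2" using ep by (simp add: pos_divide_le_eq mult.commute)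
      thus ?thesis using m0 by simp
    qed
    have sq: "sqrt (8/(k*\<delta>)) \<ge> 0" "sqrt (A/(k*\<delta>^2)) \<ge> 0" using kp Ap \<delta> by auto
    have "m \<xi> \<le> \<delta> * \<epsilon>"
    proof (cases "M > \<delta> * \<epsilon>")
      case True
      show ?thesis
        by (rule decay_core[where m=m and m'="deriv n" and k=k and e=\<epsilon> and A=A and \<delta>=\<delta>,
              OF mder mdec bnd kp ep(1) \<delta> Ap]) (use MA True m0 \<xi> in auto)
    next
      case False
      have "\<xi> > 0" using \<xi> sq by linarith
      hence "m \<xi> < M" using mdec[of 0 \<xi>] m0 by simp
      thus ?thesis using False by simp
    qed
    moreover have "\<xi> > 0" using \<xi> sq by linarith
    ultimately have "n \<xi> - 1 \<le> \<delta> * \<epsilon>" "0 < n \<xi> - 1" using F(3)[of \<xi>] by (auto simp: m_def)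
    thus ?thesis using ep by (simp add: pos_divide_le_eq)
  qed
  show ?thesis
  proof (rule exI[of _ \<epsilon>0], rule conjI[OF \<epsilon>0p], rule exI[of _ 1], rule conjI[OF zero_less_one], intro allI impI)
    fix \<delta> :: real assume \<delta>: "0 < \<delta> \<and> \<delta> < 1"
    show "\<exists>\<xi>\<delta>>0. \<forall>\<xi> \<epsilon> n u \<phi>. \<xi>\<delta> \<le> \<xi> \<and> 0 < \<epsilon> \<and> \<epsilon> < \<epsilon>0 \<and> solitary_wave \<sigma> \<gamma> \<epsilon> n u \<phi> \<longrightarrow>
               0 < (n \<xi> - 1) / \<epsilon> \<and> (n \<xi> - 1) / \<epsilon> \<le> \<delta>"
      by (rule exI[of _ "sqrt (8/(k*\<delta>)) + sqrt (A/(k*\<delta>^2)) + 1"])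
         (use main \<delta> kp Ap in \<open>auto intro!: add_nonneg_pos add_nonneg_nonneg\<close>)
  qed
qed


end
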